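(* Let $n\ge1$, let $C=(c_{i,j})$ be an $n\times n$ Bott matrix over $\mathbb{Z}_2$ and $Y_n=Y(C)$ the associated real Bott tower, and let $\alpha_{n+1},\dots,\alpha_{2n}\in\pi_1(Y_n)$ be the elements defined below, with images $\bar\alpha_j$ under the abelianization map $\pi_1(Y_n)\to H_1(Y_n;\mathbb{Z})$. Then $H_1(Y_n;\mathbb{Z})$ has a presentation with generators $\bar\alpha_j$, $n+1\le j\le 2n$, and relations $\bar\alpha_p\bar\alpha_q\bar\alpha_p^{-1}\bar\alpha_q^{-1}$ for $n+1\le p,q\le 2n$, together with $\bar\alpha_q^2$ for those $n+1\le q\le 2n$ for which there exists $p<q$ with $c_{p-n,q-n}=1$. Consequently $H_1(Y_n;\mathbb{Z})\cong\mathbb{Z}^{n-r}\oplus\mathbb{Z}_2^{r}$, where $r$ is the number of $n+1\le q\le 2n$ for which there exists $p<q$ with $c_{p-n,q-n}=1$.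
   Context: A Bott matrix is an $n\times n$ matrix $C=(c_{i,j})$ with entries in $\mathbb{Z}_2$ such that $c_{i,i}=1$ and $c_{i,j}=0$ for $i>j$ (so $c_{i,j}$ for $i\le 0$ is never $1$; only $p>n$ is relevant). Label the facets of the $n$-cube $I^n$ as $F_1,\dots,F_{2n}$ with $F_j$, $F_{n+j}$ opposite. With $e_1,\dots,e_n$ the standard basis of $\mathbb{Z}_2^n$, set $\lambda(F_j)=e_j$, $\lambda(F_{n+j})=e_j+\sum_{k>j}c_{j,k}e_k$. The real Bott tower $Y(C)$ is the small cover $(\mathbb{Z}_2^n\times I^n)/\sim$, where $(t,p)\sim(t',p')$ iff $p=p'$ and $t-t'$ lies in the span of $\lambda(F)$ over facets $F\ni p$. Let $W$ be the right-angled Coxeter group with generators $s_1,\dots,s_{2n}$ and relations $s_j^2=1$ and $(s_is_j)^2=1$ for $1\le i<j\le 2n$, $j\ne i+n$; then $\pi_1(Y_n)$ is the kernel of the homomorphism $W\to\mathbb{Z}_2^n$, $s_i\mapsto\lambda(F_i)$. For $n+1\le j\le 2n$, $\alpha_j:=s_js_{j-n}s_{j-n+1}^{c_{j-n,j-n+1}}\cdots s_n^{c_{j-n,n}}$ (so $\alpha_{2n}=s_{2n}s_n$); these lie in $\pi_1(Y_n)$ and generate it. *)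

theory Defs
  imports "HOL-Algebra.Product_Groups" "HOL-Algebra.Elementary_Groups"
    "HOL-Algebra.Generated_Groups" "HOL-Algebra.Coset" "HOL-Algebra.FiniteProduct"
begin

text \<open>Bott matrix: entries in Z_2 (rendered as bool), indices 1..n.\<close>
definition bott_matrix :: "nat \<Rightarrow> (nat \<Rightarrow> nat \<Rightarrow> bool) \<Rightarrow> bool" where
  "bott_matrix n c \<longleftrightarrow> (\<forall>i\<in>{1..n}. c i i) \<and> (\<forall>i\<in>{1..n}. \<forall>j\<in>{1..n}. i > j \<longrightarrow> \<not> c i j)"

text \<open>Generators s_1..s_{2n} of W are the letters 1..2n; words are lists.
  s_i and s_j commute unless i = j + n or j = i + n.\<close>
definition commuting :: "nat \<Rightarrow> nat \<Rightarrow> nat \<Rightarrow> bool" where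
  "commuting n i j \<longleftrightarrow> i \<in> {1..2*n} \<and> j \<in> {1..2*n} \<and> j \<noteq> i + n \<and> i \<noteq> j + n"

definition words :: "nat \<Rightarrow> nat list set" where
  "words n = {w. set w \<subseteq> {1..2*n}}"

text \<open>The congruence on words generated by the defining relations of the right-angled
  Coxeter group W: s_j^2 = 1 and (s_i s_j)^2 = 1 (i.e. s_i s_j = s_j s_i) for commuting pairs.\<close>
inductive_set wrel :: "nat \<Rightarrow> (nat list \<times> nat list) set" for n :: nat where
  wrefl: "w \<in> words n \<Longrightarrow> (w, w) \<in> wrel n"
| wsym: "(u, v) \<in> wrel n \<Longrightarrow> (v, u) \<in> wrel n"
| wtrans: "(u, v) \<in> wrel n \<Longrightarrow> (v, w) \<in> wrel n \<Longrightarrow> (u, w) \<in> wrel n"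
| wcancel: "u \<in> words n \<Longrightarrow> v \<in> words n \<Longrightarrow> s \<in> {1..2*n} \<Longrightarrow>
      (u @ [s, s] @ v, u @ v) \<in> wrel n"
| wcomm: "u \<in> words n \<Longrightarrow> v \<in> words n \<Longrightarrow> commuting n i j \<Longrightarrow>
      (u @ [i, j] @ v, u @ [j, i] @ v) \<in> wrel n"

definition coxW :: "nat \<Rightarrow> nat list set monoid" where
  "coxW n = \<lparr> carrier = words n // wrel n,
             mult = (\<lambda>A B. \<Union>a\<in>A. \<Union>b\<in>B. wrel n `` {a @ b}),
             one = wrel n `` {[]} \<rparr>"

text \<open>The characteristic function: lambda(F_i) in Z_2^n, as a predicate on coordinates 1..n.\<close>
definition lam :: "nat \<Rightarrow> (nat \<Rightarrow> nat \<Rightarrow> bool) \<Rightarrow> nat \<Rightarrow> nat \<Rightarrow> bool" where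
  "lam n c i k = (if i \<le> n then k = i
                  else k = i - n \<or> (i - n < k \<and> k \<le> n \<and> c (i - n) k))"

text \<open>Image of a word under W \<rightarrow> Z_2^n, s_i \<mapsto> lambda(F_i).\<close>
definition lam_word :: "nat \<Rightarrow> (nat \<Rightarrow> nat \<Rightarrow> bool) \<Rightarrow> nat list \<Rightarrow> nat \<Rightarrow> bool" where
  "lam_word n c w k = odd (length (filter (\<lambda>i. lam n c i k) w))"

text \<open>pi_1(Y(C)) = kernel of W \<rightarrow> Z_2^n.\<close>
definition pi1 :: "nat \<Rightarrow> (nat \<Rightarrow> nat \<Rightarrow> bool) \<Rightarrow> nat list set monoid" where
  "pi1 n c = (coxW n) \<lparr> carrier := {A \<in> carrier (coxW n). \<forall>w\<in>A. \<forall>k\<in>{1..n}. \<not> lam_word n c w k} \<rparr>"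

definition H1 :: "nat \<Rightarrow> (nat \<Rightarrow> nat \<Rightarrow> bool) \<Rightarrow> nat list set set monoid" where
  "H1 n c = pi1 n c Mod derived (pi1 n c) (carrier (pi1 n c))"

text \<open>The word alpha_j = s_j s_{j-n} s_{j-n+1}^{c_{j-n,j-n+1}} ... s_n^{c_{j-n,n}}.\<close>
definition alpha_word :: "nat \<Rightarrow> (nat \<Rightarrow> nat \<Rightarrow> bool) \<Rightarrow> nat \<Rightarrow> nat list" where
  "alpha_word n c j = [j, j - n] @ filter (\<lambda>k. c (j - n) k) [j - n + 1..<n + 1]"

definition alpha :: "nat \<Rightarrow> (nat \<Rightarrow> nat \<Rightarrow> bool) \<Rightarrow> nat \<Rightarrow> nat list set" where
  "alpha n c j = wrel n `` {alpha_word n c j}"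

definition alpha_bar :: "nat \<Rightarrow> (nat \<Rightarrow> nat \<Rightarrow> bool) \<Rightarrow> nat \<Rightarrow> nat list set set" where
  "alpha_bar n c j = derived (pi1 n c) (carrier (pi1 n c)) #>\<^bsub>pi1 n c\<^esub> alpha n c j"

definition torsion_idx :: "nat \<Rightarrow> (nat \<Rightarrow> nat \<Rightarrow> bool) \<Rightarrow> nat set" where
  "torsion_idx n c = {q \<in> {n+1..2*n}. \<exists>p. n + 1 \<le> p \<and> p < q \<and> c (p - n) (q - n)}"

end

theory Submission
  imports Defs
begin


lemma wrel_words: "(u,v) \<in> wrel n \<Longrightarrow> u \<in> words n \<and> v \<in> words n"
  by (induction rule: wrel.induct) (auto simp: words_def commuting_def)

lemma words_append[simp]: "u @ v \<in> words n \<longleftrightarrow> u \<in> words n \<and> v \<in> words n"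
  by (auto simp: words_def)

lemma words_Cons[simp]: "a # v \<in> words n \<longleftrightarrow> a \<in> {1..2*n} \<and> v \<in> words n"
  by (auto simp: words_def)

lemma words_Nil[simp]: "[] \<in> words n"
  by (auto simp: words_def)

lemma words_rev[simp]: "rev u \<in> words n \<longleftrightarrow> u \<in> words n"
  by (auto simp: words_def)

lemma wrel_cong_r: "(a,u) \<in> wrel n \<Longrightarrow> b \<in> words n \<Longrightarrow> (a@b, u@b) \<in> wrel n"
proof (induction rule: wrel.induct)
  case (wrefl w) then show ?case by (auto intro: wrel.wrefl)
next
  case (wsym u v) then show ?case by (auto intro: wrel.wsym)
next
  case (wtrans u v w) then show ?case by (auto intro: wrel.wtrans)
next
  case (wcancel u v s) then show ?case using wrel.wcancel[of u n "v@b" s] by auto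
next
  case (wcomm u v i j) then show ?case using wrel.wcomm[of u n "v@b" i j] by auto
qed

lemma wrel_cong_l: "(a,v) \<in> wrel n \<Longrightarrow> u \<in> words n \<Longrightarrow> (u@a, u@v) \<in> wrel n"
proof (induction rule: wrel.induct)
  case (wrefl w) then show ?case by (auto intro: wrel.wrefl)
next
  case (wsym x y) then show ?case by (auto intro: wrel.wsym)
next
  case (wtrans x y w) then show ?case by (auto intro: wrel.wtrans)
next
  case (wcancel x y s) then show ?case using wrel.wcancel[of "u@x" n "y" s] by auto
next
  case (wcomm x y i j) then show ?case using wrel.wcomm[of "u@x" n "y" i j] by auto
qed

lemma wrel_app: "(a,u) \<in> wrel n \<Longrightarrow> (b,v) \<in> wrel n \<Longrightarrow> (a@b, u@v) \<in> wrel n"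
  by (meson wrel.wtrans wrel_cong_l wrel_cong_r wrel_words)

lemma wrel_equiv: "equiv (words n) (wrel n)"
  unfolding equiv_def refl_on_def sym_def trans_def
  by (auto dest: wrel_words intro: wrel.intros)

lemma commuting_sym: "commuting n a b \<Longrightarrow> commuting n b a"
  by (auto simp: commuting_def)

lemma MOVE: "u \<in> words n \<Longrightarrow> x \<in> words n \<Longrightarrow> \<forall>a\<in>set v. commuting n a i \<Longrightarrow>
   i \<in> {1..2*n} \<Longrightarrow> (u @ v @ [i] @ x, u @ [i] @ v @ x) \<in> wrel n"
proof (induction v arbitrary: u)
  case Nil then show ?case by (auto intro: wrel.wrefl)
next
  case (Cons a v)
  have aw: "a \<in> {1..2*n}" "v \<in> words n" using Cons.prems by (auto simp: commuting_def words_def)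
  have 1: "(u @ a # v @ i # x, u @ a # i # v @ x) \<in> wrel n"
    using Cons.IH[of "u@[a]"] Cons.prems aw by auto
  have 2: "(u @ a # i # v @ x, u @ i # a # v @ x) \<in> wrel n"
    using Cons.prems aw wrel.wcomm[of u n "v@x" a i] by auto
  show ?case using wrel.wtrans[OF 1 2] by simp
qed

lemma MOVEW: "u \<in> words n \<Longrightarrow> x \<in> words n \<Longrightarrow> v \<in> words n \<Longrightarrow> \<forall>a\<in>set v. \<forall>b\<in>set y. commuting n a b \<Longrightarrow>
   y \<in> words n \<Longrightarrow> (u @ v @ y @ x, u @ y @ v @ x) \<in> wrel n"
proof (induction y arbitrary: u)
  case Nil then show ?case by (auto intro: wrel.wrefl simp: words_def commuting_def)
next
  case (Cons b y)
  have 1: "(u @ v @ [b] @ (y @ x), u @ [b] @ v @ (y@x)) \<in> wrel n"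
    using Cons.prems by (intro MOVE) (auto simp: words_def commuting_def)
  have 2: "((u@[b]) @ v @ y @ x, (u@[b]) @ y @ v @ x) \<in> wrel n"
    using Cons.IH[of "u@[b]"] Cons.prems by auto
  show ?case using wrel.wtrans[OF 1] 2 by simp
qed

lemma REVC: "\<forall>a\<in>set x. \<forall>b\<in>set x. commuting n a b \<Longrightarrow> (x, rev x) \<in> wrel n"
proof (induction x)
  case Nil then show ?case by (auto intro: wrel.wrefl)
next
  case (Cons a x)
  have xw: "x \<in> words n" "a \<in> {1..2*n}" using Cons.prems by (auto simp: words_def commuting_def)
  have 1: "([a] @ x, [a] @ rev x) \<in> wrel n"
    using Cons xw by (intro wrel_cong_l) auto
  have 2: "(rev x @ [a], [a] @ rev x) \<in> wrel n"
    using Cons.prems xw MOVE[of "[]" n "[]" "rev x" a] by auto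
  show ?case using wrel.wtrans[OF 1 wrel.wsym[OF 2]] by simp
qed

lemma INV: "x \<in> words n \<Longrightarrow> (x @ rev x, []) \<in> wrel n"
proof (induction x)
  case Nil then show ?case by (auto intro: wrel.wrefl)
next
  case (Cons a x)
  have 1: "([a] @ (x @ rev x) @ [a], [a] @ [] @ [a]) \<in> wrel n"
    using Cons by (intro wrel_app wrel.wrefl) auto
  have 2: "([a,a], []) \<in> wrel n" using Cons.prems wrel.wcancel[of "[]" n "[]" a] by auto
  show ?case using wrel.wtrans[OF 1] 2 by simp
qed



abbreviation cls :: "nat \<Rightarrow> nat list \<Rightarrow> nat list set" where
  "cls n w \<equiv> wrel n `` {w}"

lemma cls_eq_iff: "u \<in> words n \<Longrightarrow> v \<in> words n \<Longrightarrow> cls n u = cls n v \<longleftrightarrow> (u,v) \<in> wrel n"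
  using eq_equiv_class_iff[OF wrel_equiv] by blast

lemma cls_eqI: "(u,v) \<in> wrel n \<Longrightarrow> cls n u = cls n v"
  using cls_eq_iff wrel_words by blast

lemma carrier_coxW: "carrier (coxW n) = words n // wrel n"
  by (simp add: coxW_def)

lemma cls_in_carrier: "w \<in> words n \<Longrightarrow> cls n w \<in> carrier (coxW n)"
  by (simp add: coxW_def quotientI)

lemma carrier_coxW_E: "X \<in> carrier (coxW n) \<Longrightarrow> (\<And>w. w \<in> words n \<Longrightarrow> X = cls n w \<Longrightarrow> P) \<Longrightarrow> P"
  by (auto simp: coxW_def quotient_def)

lemma mult_cls: "u \<in> words n \<Longrightarrow> v \<in> words n \<Longrightarrow> cls n u \<otimes>\<^bsub>coxW n\<^esub> cls n v = cls n (u @ v)"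
proof -
  assume u: "u \<in> words n" and v: "v \<in> words n"
  have "(\<Union>a\<in>cls n u. \<Union>b\<in>cls n v. cls n (a @ b)) = cls n (u @ v)"
  proof
    show "(\<Union>a\<in>cls n u. \<Union>b\<in>cls n v. cls n (a @ b)) \<subseteq> cls n (u @ v)"
      by (auto, meson wrel.wsym wrel.wtrans wrel_app)
    show "cls n (u @ v) \<subseteq> (\<Union>a\<in>cls n u. \<Union>b\<in>cls n v. cls n (a @ b))"
      using u v by (auto intro: wrel.wrefl)
  qed
  then show ?thesis by (simp add: coxW_def)
qed

lemma one_coxW: "\<one>\<^bsub>coxW n\<^esub> = cls n []"
  by (simp add: coxW_def)

lemma group_coxW: "group (coxW n)"
proof (rule groupI)
  fix x y assume "x \<in> carrier (coxW n)" "y \<in> carrier (coxW n)"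
  then show "x \<otimes>\<^bsub>coxW n\<^esub> y \<in> carrier (coxW n)"
    by (auto elim!: carrier_coxW_E simp: mult_cls cls_in_carrier)
next
  show "\<one>\<^bsub>coxW n\<^esub> \<in> carrier (coxW n)" by (simp add: one_coxW cls_in_carrier)
next
  fix x y z assume "x \<in> carrier (coxW n)" "y \<in> carrier (coxW n)" "z \<in> carrier (coxW n)"
  then show "x \<otimes>\<^bsub>coxW n\<^esub> y \<otimes>\<^bsub>coxW n\<^esub> z = x \<otimes>\<^bsub>coxW n\<^esub> (y \<otimes>\<^bsub>coxW n\<^esub> z)"
    by (auto elim!: carrier_coxW_E simp: mult_cls)
next
  fix x assume "x \<in> carrier (coxW n)"
  then show "\<one>\<^bsub>coxW n\<^esub> \<otimes>\<^bsub>coxW n\<^esub> x = x"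
    by (auto elim!: carrier_coxW_E simp: mult_cls one_coxW)
next
  fix x assume "x \<in> carrier (coxW n)"
  then obtain w where w: "w \<in> words n" "x = cls n w" by (auto elim!: carrier_coxW_E)
  have "cls n (rev w) \<otimes>\<^bsub>coxW n\<^esub> x = \<one>\<^bsub>coxW n\<^esub>"
    using w INV[of "rev w" n] by (simp add: mult_cls one_coxW cls_eqI)
  then show "\<exists>y\<in>carrier (coxW n). y \<otimes>\<^bsub>coxW n\<^esub> x = \<one>\<^bsub>coxW n\<^esub>"
    using w cls_in_carrier by (metis words_rev)
qed

lemma inv_cls: "w \<in> words n \<Longrightarrow> inv\<^bsub>coxW n\<^esub> (cls n w) = cls n (rev w)"
  apply (rule group.inv_equality[OF group_coxW])
  using INV[of "rev w" n] by (simp_all add: mult_cls one_coxW cls_eqI cls_in_carrier)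

definition cpar :: "(nat \<Rightarrow> bool) \<Rightarrow> nat list \<Rightarrow> bool" where
  "cpar P w = odd (length (filter P w))"

lemma cpar_append[simp]: "cpar P (u @ v) = (cpar P u \<noteq> cpar P v)"
  by (simp add: cpar_def)

lemma cpar_Cons[simp]: "cpar P (a # v) = (P a \<noteq> cpar P v)"
  by (simp add: cpar_def)

lemma cpar_Nil[simp]: "cpar P [] = False"
  by (simp add: cpar_def)

lemma cpar_rev[simp]: "cpar P (rev w) = cpar P w"
  by (simp add: cpar_def rev_filter[symmetric])

lemma cpar_wrel: "(u,v) \<in> wrel n \<Longrightarrow> cpar P u = cpar P v"
  by (induction rule: wrel.induct) auto

lemma lam_word_cpar: "lam_word n c w k = cpar (\<lambda>i. lam n c i k) w"
  by (simp add: lam_word_def cpar_def)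

text \<open>the D-infinity invariant\<close>

definition dstep :: "nat \<Rightarrow> nat \<Rightarrow> nat \<Rightarrow> int \<times> bool \<Rightarrow> int \<times> bool" where
  "dstep n k a p = (if a = k then (- fst p, \<not> snd p)
                 else if a = k + n then (1 - fst p, \<not> snd p) else p)"

definition dinf :: "nat \<Rightarrow> nat \<Rightarrow> nat list \<Rightarrow> int \<times> bool" where
  "dinf n k w = foldr (dstep n k) w (0, False)"

definition dcomp :: "int \<times> bool \<Rightarrow> int \<times> bool \<Rightarrow> int \<times> bool" where
  "dcomp p q = (fst p + (if snd p then - fst q else fst q), snd p \<noteq> snd q)"

lemma dinf_Nil[simp]: "dinf n k [] = (0, False)"
  by (simp add: dinf_def)

lemma dinf_Cons: "dinf n k (a # w) = dstep n k a (dinf n k w)"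
  by (simp add: dinf_def)

lemma dcomp_step: "dstep n k a (dcomp p q) = dcomp (dstep n k a p) q"
  by (auto simp: dstep_def dcomp_def)

lemma dinf_append: "dinf n k (u @ v) = dcomp (dinf n k u) (dinf n k v)"
  by (induction u) (auto simp: dinf_Cons dcomp_step, simp add: dcomp_def)

lemma dcomp_assoc: "dcomp (dcomp p q) r = dcomp p (dcomp q r)"
  by (auto simp: dcomp_def)

lemma dcomp_zero: "dcomp (0, False) q = q"
  by (simp add: dcomp_def)

lemma dinf_wrel: "(u,v) \<in> wrel n \<Longrightarrow> dinf n k u = dinf n k v"
proof (induction rule: wrel.induct)
  case (wcancel u v s)
  have "dinf n k [s,s] = (0, False)"
    by (auto simp: dinf_Cons dstep_def)
  then show ?case using dinf_append[of n k "[s,s]" v] by (simp add: dinf_append dcomp_zero)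
next
  case (wcomm u v i j)
  have "dinf n k [i,j] = dinf n k [j,i]"
    using wcomm by (auto simp: dinf_Cons dstep_def commuting_def)
  then show ?case using dinf_append[of n k "[i,j]" v] dinf_append[of n k "[j,i]" v] by (simp add: dinf_append)
qed auto

lemma snd_dinf: "snd (dinf n k w) = cpar (\<lambda>a. a = k \<or> a = k + n) w"
  by (induction w) (auto simp: dinf_Cons dstep_def)



definition weq :: "nat \<Rightarrow> nat list \<Rightarrow> nat list \<Rightarrow> bool" where
  "weq n u v \<longleftrightarrow> (u,v) \<in> wrel n"

lemma weq_trans[trans]: "weq n a b \<Longrightarrow> weq n b c \<Longrightarrow> weq n a c"
  unfolding weq_def by (rule wrel.wtrans)

lemma weq_sym: "weq n a b \<Longrightarrow> weq n b a"
  unfolding weq_def by (rule wrel.wsym)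

lemma weq_refl: "a \<in> words n \<Longrightarrow> weq n a a"
  unfolding weq_def by (rule wrel.wrefl)

lemma weq_app: "weq n a u \<Longrightarrow> weq n b v \<Longrightarrow> weq n (a@b) (u@v)"
  unfolding weq_def by (rule wrel_app)

lemma weq_words: "weq n a b \<Longrightarrow> a \<in> words n \<and> b \<in> words n"
  unfolding weq_def by (rule wrel_words)

lemma weq_app_l: "weq n b v \<Longrightarrow> u \<in> words n \<Longrightarrow> weq n (u@b) (u@v)"
  using weq_app weq_refl by blast

lemma weq_app_r: "weq n b v \<Longrightarrow> u \<in> words n \<Longrightarrow> weq n (b@u) (v@u)"
  using weq_app weq_refl by blast

lemma weq_cancel: "u \<in> words n \<Longrightarrow> v \<in> words n \<Longrightarrow> s \<in> {1..2*n} \<Longrightarrow> weq n (u @ s # s # v) (u @ v)"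
  using wrel.wcancel[of u n v s] by (simp add: weq_def)

definition low :: "nat \<Rightarrow> nat list \<Rightarrow> bool" where
  "low n w \<longleftrightarrow> set w \<subseteq> {1..n}"

lemma low_words: "low n w \<Longrightarrow> w \<in> words n"
  by (auto simp: low_def words_def)

lemma comm_low: "a \<in> {1..n} \<Longrightarrow> b \<in> {1..n} \<Longrightarrow> commuting n a b"
  by (auto simp: commuting_def)

lemma comm_low_high: "a \<in> {1..n} \<Longrightarrow> q \<in> {n+1..2*n} \<Longrightarrow> a \<noteq> q - n \<Longrightarrow> commuting n a q"
  by (auto simp: commuting_def)

lemma comm_high: "p \<in> {n+1..2*n} \<Longrightarrow> q \<in> {n+1..2*n} \<Longrightarrow> commuting n p q"
  by (auto simp: commuting_def)

definition rho :: "nat \<Rightarrow> nat set \<Rightarrow> nat list" where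
  "rho n B = filter (\<lambda>k. k \<in> B) [1..<n+1]"

definition tog :: "nat set \<Rightarrow> nat \<Rightarrow> nat set" where
  "tog B i = (if i \<in> B then B - {i} else insert i B)"

lemma low_rho: "low n (rho n B)"
  by (auto simp: low_def rho_def)

lemma RHO: "i \<in> {1..n} \<Longrightarrow> weq n (rho n B @ [i]) (rho n (tog B i))"
proof -
  assume i: "i \<in> {1..n}"
  have split: "[1..<n+1] = [1..<i] @ [i] @ [i+1..<n+1]"
  proof -
    have "[1..<n+1] = [1..<i] @ [i..<n+1]"
      using i upt_add_eq_append[of 1 i "n + 1 - i"] by auto
    also have "[i..<n+1] = i # [i+1..<n+1]" using i by (simp add: upt_conv_Cons)
    finally show ?thesis by simp
  qed
  define L where "L = filter (\<lambda>k. k \<in> B) [1..<i]"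
  define U where "U = filter (\<lambda>k. k \<in> B) [i+1..<n+1]"
  have L': "filter (\<lambda>k. k \<in> tog B i) [1..<i] = L"
    unfolding L_def tog_def by (rule filter_cong) auto
  have U': "filter (\<lambda>k. k \<in> tog B i) [i+1..<n+1] = U"
    unfolding U_def tog_def by (rule filter_cong) auto
  have r1: "rho n B = L @ (if i \<in> B then [i] else []) @ U"
    unfolding rho_def L_def U_def by (subst split) simp
  have r2: "rho n (tog B i) = L @ (if i \<in> B then [] else [i]) @ U"
    unfolding rho_def by (subst split, simp only: filter_append L' U') (simp add: tog_def)
  have Lw: "L \<in> words n" and Uw: "U \<in> words n"
    using i by (auto simp: L_def U_def words_def)
  have Uc: "\<forall>a\<in>set U. commuting n a i" using i by (auto simp: U_def commuting_def)
  let ?X = "if i \<in> B then [i] else []"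
  have "weq n (rho n B @ [i]) ((L @ ?X) @ U @ [i] @ [])"
    using r1 Lw Uw i by (auto intro!: weq_refl)
  also have "weq n ... ((L @ ?X) @ [i] @ U @ [])"
    unfolding weq_def using Lw Uw i Uc by (intro MOVE) auto
  also have "weq n ... (rho n (tog B i))"
  proof (cases "i \<in> B")
    case True
    then show ?thesis using r2 weq_cancel[of L n U i] Lw Uw i by simp
  next
    case False
    then show ?thesis using r2 Lw Uw i by (auto intro!: weq_refl)
  qed
  finally show ?thesis .
qed

lemma RHOW: "low n x \<Longrightarrow> \<exists>B'. weq n (rho n B @ x) (rho n B')"
proof (induction x arbitrary: B)
  case Nil then show ?case by (auto intro!: exI[of _ B] weq_refl low_words low_rho)
next
  case (Cons a x)
  have a: "a \<in> {1..n}" "low n x" using Cons.prems by (auto simp: low_def)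
  obtain B' where B': "weq n (rho n (tog B a) @ x) (rho n B')" using Cons.IH a by blast
  have "weq n (rho n B @ (a # x)) ((rho n B @ [a]) @ x)" using low_words[OF low_rho] low_words[OF Cons.prems] by (auto intro!: weq_refl)
  also have "weq n ... (rho n (tog B a) @ x)" using RHO[OF a(1)] a low_words by (intro weq_app_r)
  also have "weq n ... (rho n B')" by (rule B')
  finally show ?case by blast
qed

definition Pw :: "nat \<Rightarrow> (nat \<Rightarrow> nat \<Rightarrow> bool) \<Rightarrow> nat \<Rightarrow> nat list" where
  "Pw n c q = filter (\<lambda>k. c (q - n) k) [q - n + 1..<n + 1]"

lemma alpha_word_P: "alpha_word n c q = [q, q - n] @ Pw n c q"
  by (simp add: alpha_word_def Pw_def)

lemma set_Pw: "set (Pw n c q) \<subseteq> {q - n + 1..n}"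
  by (auto simp: Pw_def)

definition gam :: "nat \<Rightarrow> (nat \<Rightarrow> nat \<Rightarrow> bool) \<Rightarrow> nat \<Rightarrow> bool \<Rightarrow> nat list" where
  "gam n c q b = (if b then rev (alpha_word n c q) else alpha_word n c q)"

lemma alpha_word_words: "q \<in> {n+1..2*n} \<Longrightarrow> alpha_word n c q \<in> words n"
  using set_Pw[of n c q] by (auto simp: alpha_word_P words_def)

lemma gam_words: "q \<in> {n+1..2*n} \<Longrightarrow> gam n c q b \<in> words n"
  using alpha_word_words by (simp add: gam_def)

lemma SL:
  assumes a: "a \<in> {1..n}" and q: "q \<in> {n+1..2*n}"
  shows "weq n ([a] @ gam n c q b) (gam n c q (b \<noteq> (a = q - n)) @ [a])"
proof -
  define i where "i = q - n"
  define P where "P = Pw n c q"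
  have i: "i \<in> {1..n}" using q by (auto simp: i_def)
  have Pset: "set P \<subseteq> {i+1..n}" using set_Pw[of n c q] by (simp add: P_def i_def)
  have Pw: "P \<in> words n" using Pset by (auto simp: words_def)
  have aw: "alpha_word n c q = [q, i] @ P" by (simp add: alpha_word_P P_def i_def)
  have qi: "q \<in> {1..2*n}" using q by auto
  have PP: "weq n P (rev P)" unfolding weq_def
    by (rule REVC) (use Pset in \<open>auto intro!: comm_low\<close>)
  show ?thesis
  proof (cases "a = i")
    case False
    have c: "\<forall>x\<in>set (gam n c q b). commuting n x a"
      using Pset a i q False
      by (auto simp: gam_def aw i_def commuting_def)
    have "weq n ([] @ gam n c q b @ [a] @ []) ([] @ [a] @ gam n c q b @ [])"
      unfolding weq_def using gam_words[OF q] a c by (intro MOVE) auto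
    then show ?thesis using False by (simp add: i_def weq_sym)
  next
    case True
    note ai = True
    show ?thesis
    proof (cases b)
      case False
      have c: "\<forall>x\<in>set [i,q,i]. \<forall>y\<in>set P. commuting n x y"
        using Pset q i by (auto simp: i_def commuting_def)
      have "weq n ([a] @ gam n c q b) ([] @ [i,q,i] @ P @ [])"
        using False ai aw Pw qi i by (auto simp: gam_def intro!: weq_refl)
      also have "weq n ... ([] @ P @ [i,q,i] @ [])"
        unfolding weq_def using c Pw qi i by (intro MOVEW) auto
      also have "weq n ... (rev P @ [i,q,i])"
        using PP qi i by (auto intro!: weq_app_r)
      also have "weq n ... (gam n c q (b \<noteq> (a = q - n)) @ [a])"
        using False ai aw Pw qi i by (auto simp: gam_def i_def intro!: weq_refl)
      finally show ?thesis .
    next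
      case True
      have cP: "\<forall>x\<in>set P. commuting n x i" using Pset i by (auto simp: commuting_def)
      have cPq: "\<forall>x\<in>set P. commuting n x q" using Pset q by (auto simp: i_def commuting_def)
      have "weq n ([a] @ gam n c q b) ([i] @ rev P @ [i,q])"
        using True ai aw Pw qi i by (auto simp: gam_def intro!: weq_refl)
      also have "weq n ... ([i] @ P @ [i,q])"
        using weq_sym[OF PP] Pw qi i by (intro weq_app_l weq_app_r) auto
      also have "weq n ... ([] @ P @ [i] @ [i,q])"
      proof -
        have "([] @ P @ [i] @ [i,q], [] @ [i] @ P @ [i,q]) \<in> wrel n"
          using cP Pw qi i by (intro MOVE) auto
        then show ?thesis unfolding weq_def by (simp add: wrel.wsym)
      qed
      also have "weq n ... (P @ [q])"
        using weq_cancel[of P n "[q]" i] Pw qi i by simp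
      also have "weq n ... ([] @ [q] @ P @ [])"
      proof -
        have "([] @ P @ [q] @ [], [] @ [q] @ P @ []) \<in> wrel n"
          using cPq Pw qi i by (intro MOVE) auto
        then show ?thesis unfolding weq_def by simp
      qed
      also have "weq n ... ([q] @ [i,i] @ P)"
        using weq_cancel[of "[q]" n P i] Pw qi i by (simp add: weq_sym)
      also have "weq n ... ([q,i] @ P @ [i] @ [])"
      proof -
        have "([q,i] @ P @ [i] @ [], [q,i] @ [i] @ P @ []) \<in> wrel n"
          using cP Pw qi i by (intro MOVE) auto
        then show ?thesis unfolding weq_def by (simp add: wrel.wsym)
      qed
      also have "weq n ... (gam n c q (b \<noteq> (a = q - n)) @ [a])"
        using True ai aw Pw qi i by (auto simp: gam_def i_def intro!: weq_refl)
      finally show ?thesis .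
    qed
  qed
qed

lemma CONJ:
  assumes x: "low n x" and q: "q \<in> {n+1..2*n}"
  shows "weq n (x @ gam n c q b) (gam n c q (b \<noteq> cpar (\<lambda>a. a = q - n) x) @ x)"
  using x
proof (induction x arbitrary: b)
  case Nil then show ?case using gam_words[OF q] by (auto intro: weq_refl)
next
  case (Cons a x)
  have a: "a \<in> {1..n}" "low n x" using Cons.prems by (auto simp: low_def)
  let ?b1 = "b \<noteq> cpar (\<lambda>a. a = q - n) x"
  have "weq n ((a # x) @ gam n c q b) ([a] @ (x @ gam n c q b))" using Cons.prems a gam_words[OF q] low_words
    by (auto intro!: weq_refl)
  also have "weq n ... ([a] @ (gam n c q ?b1 @ x))"
    using Cons.IH[OF a(2)] a by (intro weq_app_l) auto
  also have "weq n ... (([a] @ gam n c q ?b1) @ x)" using Cons.prems a gam_words[OF q] low_words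
    by (auto intro!: weq_refl)
  also have "weq n ... ((gam n c q (?b1 \<noteq> (a = q - n)) @ [a]) @ x)"
    using SL[OF a(1) q] a low_words by (intro weq_app_r) auto
  also have "(gam n c q (?b1 \<noteq> (a = q - n)) @ [a]) @ x = gam n c q (b \<noteq> cpar (\<lambda>a. a = q - n) (a # x)) @ (a # x)"
    by (auto intro: arg_cong[where f="\<lambda>b. gam n c q b"])
  finally show ?case .
qed



lemma cpar_cong: "(\<And>a. a \<in> set w \<Longrightarrow> P a = Q a) \<Longrightarrow> cpar P w = cpar Q w"
  unfolding cpar_def by (metis filter_cong)

lemma cpar_distinct: "distinct w \<Longrightarrow> cpar (\<lambda>a. a = k) w = (k \<in> set w)"
  by (induction w) auto

lemma carrier_pi1: "carrier (pi1 n c) = {A \<in> carrier (coxW n). \<forall>w\<in>A. \<forall>k\<in>{1..n}. \<not> lam_word n c w k}"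
  by (simp add: pi1_def)

lemma cls_in_pi1: "w \<in> words n \<Longrightarrow> cls n w \<in> carrier (pi1 n c) \<longleftrightarrow> (\<forall>k\<in>{1..n}. \<not> lam_word n c w k)"
  unfolding carrier_pi1 lam_word_cpar
  by (auto simp: cls_in_carrier intro: wrel.wrefl dest: cpar_wrel)

lemma pi1_carrier_E:
  assumes X: "X \<in> carrier (pi1 n c)"
  obtains w where "w \<in> words n" "X = cls n w" "\<forall>k\<in>{1..n}. \<not> lam_word n c w k"
proof -
  have X1: "X \<in> carrier (coxW n)" and X2: "\<forall>w\<in>X. \<forall>k\<in>{1..n}. \<not> lam_word n c w k"
    using X by (auto simp: carrier_pi1)
  obtain w where w: "w \<in> words n" "X = cls n w" using X1 by (rule carrier_coxW_E)
  have "w \<in> X" using w by (auto intro: wrel.wrefl)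
  then show ?thesis using that w X2 by blast
qed

lemma subgroup_pi1: "subgroup (carrier (pi1 n c)) (coxW n)"
proof (rule group.subgroupI[OF group_coxW])
  show "carrier (pi1 n c) \<subseteq> carrier (coxW n)" by (auto simp: carrier_pi1)
  show "carrier (pi1 n c) \<noteq> {}"
    using cls_in_pi1[of "[]" n c] by (auto simp: lam_word_cpar)
next
  fix a assume "a \<in> carrier (pi1 n c)"
  then obtain w where w: "w \<in> words n" "a = cls n w" "\<forall>k\<in>{1..n}. \<not> lam_word n c w k"
    by (rule pi1_carrier_E)
  then show "inv\<^bsub>coxW n\<^esub> a \<in> carrier (pi1 n c)"
    by (simp add: inv_cls cls_in_pi1 lam_word_cpar)
next
  fix a b assume "a \<in> carrier (pi1 n c)" "b \<in> carrier (pi1 n c)"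
  then obtain u v where "u \<in> words n" "a = cls n u" "\<forall>k\<in>{1..n}. \<not> lam_word n c u k"
     "v \<in> words n" "b = cls n v" "\<forall>k\<in>{1..n}. \<not> lam_word n c v k"
    by (metis pi1_carrier_E)
  then show "a \<otimes>\<^bsub>coxW n\<^esub> b \<in> carrier (pi1 n c)"
    by (simp add: mult_cls cls_in_pi1 lam_word_cpar)
qed

lemma pi1_eq: "pi1 n c = coxW n \<lparr>carrier := carrier (pi1 n c)\<rparr>"
  by (simp add: pi1_def)

lemma group_pi1: "group (pi1 n c)"
  using group.subgroup_imp_group[OF group_coxW subgroup_pi1] pi1_eq by metis

lemma mult_pi1[simp]: "x \<otimes>\<^bsub>pi1 n c\<^esub> y = x \<otimes>\<^bsub>coxW n\<^esub> y"
  by (simp add: pi1_def)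

lemma one_pi1[simp]: "\<one>\<^bsub>pi1 n c\<^esub> = cls n []"
  by (simp add: pi1_def one_coxW)

lemma inv_pi1: "x \<in> carrier (pi1 n c) \<Longrightarrow> inv\<^bsub>pi1 n c\<^esub> x = inv\<^bsub>coxW n\<^esub> x"
  using group.m_inv_consistent[OF group_coxW subgroup_pi1] pi1_eq by metis


lemma lam_low: "a \<in> {1..n} \<Longrightarrow> lam n c a k = (a = k)"
  by (auto simp: lam_def)

lemma distinct_Pw: "distinct (Pw n c q)"
  by (simp add: Pw_def)

lemma alpha_in_pi1: "q \<in> {n+1..2*n} \<Longrightarrow> alpha n c q \<in> carrier (pi1 n c)"
proof -
  assume q: "q \<in> {n+1..2*n}"
  define i where "i = q - n"
  have i: "i \<in> {1..n}" using q by (auto simp: i_def)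
  have Pset: "set (Pw n c q) \<subseteq> {i+1..n}" using set_Pw[of n c q] by (simp add: i_def)
  show ?thesis unfolding alpha_def
  proof (subst cls_in_pi1)
    show "alpha_word n c q \<in> words n" using alpha_word_words q by blast
    show "\<forall>k\<in>{1..n}. \<not> lam_word n c (alpha_word n c q) k"
    proof
      fix k assume k: "k \<in> {1..n}"
      have "cpar (\<lambda>a. lam n c a k) (Pw n c q) = cpar (\<lambda>a. a = k) (Pw n c q)"
        using Pset i by (intro cpar_cong) (auto simp: lam_def)
      also have "\<dots> = (k \<in> set (Pw n c q))" by (simp add: cpar_distinct distinct_Pw)
      also have "\<dots> = (i < k \<and> k \<le> n \<and> c i k)" by (auto simp: Pw_def i_def)
      finally have "cpar (\<lambda>a. lam n c a k) (Pw n c q) = (i < k \<and> k \<le> n \<and> c i k)" .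
      then show "\<not> lam_word n c (alpha_word n c q) k"
        using q i k by (auto simp: lam_word_cpar alpha_word_P lam_def i_def)
    qed
  qed
qed

lemma cls_rho_pi1: "cls n (rho n B) \<in> carrier (pi1 n c) \<Longrightarrow> rho n B = []"
proof -
  assume a: "cls n (rho n B) \<in> carrier (pi1 n c)"
  have l: "low n (rho n B)" by (rule low_rho)
  have "\<forall>k\<in>{1..n}. \<not> lam_word n c (rho n B) k" using a cls_in_pi1 low_words[OF l] by blast
  moreover have "lam_word n c (rho n B) k = (k \<in> set (rho n B))" if "k \<in> {1..n}" for k
  proof -
    have "lam_word n c (rho n B) k = cpar (\<lambda>a. a = k) (rho n B)"
      unfolding lam_word_cpar using l by (intro cpar_cong) (auto simp: low_def lam_def)
    then show ?thesis by (simp add: cpar_distinct rho_def)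
  qed
  ultimately have "set (rho n B) = {}" using l unfolding low_def by (metis subsetD equals0I)
  then show ?thesis by simp
qed

lemma GEN:
  assumes w: "w \<in> words n"
  shows "\<exists>g\<in>generate (pi1 n c) (alpha n c ` {n+1..2*n}). \<exists>B. cls n w = g \<otimes>\<^bsub>coxW n\<^esub> cls n (rho n B)"
  using w
proof (induction w rule: rev_induct)
  case Nil
  have "rho n {} = []" by (simp add: rho_def)
  then show ?case
    using monoid.l_one[OF group.is_monoid[OF group_coxW]] cls_in_carrier[of "[]" n]
      generate.one[of "pi1 n c" "alpha n c ` {n+1..2*n}"]
    by (intro bexI[of _ "\<one>\<^bsub>pi1 n c\<^esub>"] exI[of _ "{}"]) (auto simp: one_coxW)
next
  case (snoc a w)
  have aw: "a \<in> {1..2*n}" "w \<in> words n" using snoc.prems by auto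
  let ?A = "generate (pi1 n c) (alpha n c ` {n+1..2*n})"
  have Asub: "?A \<subseteq> carrier (pi1 n c)"
    using group.generate_incl[OF group_pi1] alpha_in_pi1 by blast
  have AW: "g \<in> ?A \<Longrightarrow> g \<in> carrier (coxW n)" for g
    using Asub subgroup.subset[OF subgroup_pi1] by blast
  obtain g B where g: "g \<in> ?A" "cls n w = g \<otimes>\<^bsub>coxW n\<^esub> cls n (rho n B)" using snoc.IH aw by blast
  have rw: "rho n B \<in> words n" using low_rho low_words by blast
  have e1: "cls n (w @ [a]) = g \<otimes>\<^bsub>coxW n\<^esub> cls n (rho n B @ [a])"
  proof -
    have "cls n (w @ [a]) = cls n w \<otimes>\<^bsub>coxW n\<^esub> cls n [a]" using aw by (simp add: mult_cls)
    also have "\<dots> = g \<otimes>\<^bsub>coxW n\<^esub> (cls n (rho n B) \<otimes>\<^bsub>coxW n\<^esub> cls n [a])"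
      using g AW aw rw by (simp add: group.is_monoid[OF group_coxW] monoid.m_assoc cls_in_carrier)
    finally show ?thesis using aw rw by (simp add: mult_cls)
  qed
  show ?case
  proof (cases "a \<le> n")
    case True
    then have "a \<in> {1..n}" using aw by auto
    from RHO[OF this, of B] have "cls n (rho n B @ [a]) = cls n (rho n (tog B a))"
      by (simp add: weq_def cls_eqI)
    then have "cls n (w @ [a]) = g \<otimes>\<^bsub>coxW n\<^esub> cls n (rho n (tog B a))" using e1 by simp
    then show ?thesis using g(1) by (intro bexI[of _ g] exI[of _ "tog B a"])
  next
    case False
    define q where "q = a"
    define i where "i = q - n"
    define P where "P = Pw n c q"
    have q: "q \<in> {n+1..2*n}" using aw False by (auto simp: q_def)
    have i: "i \<in> {1..n}" using q by (auto simp: i_def)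
    have Pset: "set P \<subseteq> {i+1..n}" using set_Pw[of n c q] by (simp add: P_def i_def)
    have Pw: "P \<in> words n" using Pset by (auto simp: words_def)
    have awq: "alpha_word n c q = [q, i] @ P" by (simp add: alpha_word_P P_def i_def)
    have lowx: "low n (rev P @ [i])" using Pset i by (auto simp: low_def)
    obtain B' where B': "weq n (rho n B @ (rev P @ [i])) (rho n B')" using RHOW[OF lowx] by blast
    let ?b = "False \<noteq> cpar (\<lambda>a. a = q - n) (rho n B)"
    have "weq n (rho n B @ [q]) (rho n B @ ([q,i] @ [] @ [i]))"
      using weq_app_l[OF weq_sym[OF weq_cancel[of "[q]" n "[]" i]], of "rho n B"] rw q i by simp
    also have "weq n ... (rho n B @ ([q,i] @ (P @ rev P) @ [i]))"
      using weq_app_l[OF weq_app_l[OF weq_sym[OF weq_app_r[OF INV[OF Pw, folded weq_def], of "[i]"]], of "[q,i]"], of "rho n B"] rw q i Pw by simp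
    also have "(rho n B @ ([q,i] @ (P @ rev P) @ [i])) = (rho n B @ gam n c q False) @ (rev P @ [i])"
      by (simp add: gam_def awq)
    also have "weq n ... ((gam n c q ?b @ rho n B) @ (rev P @ [i]))"
      using CONJ[OF low_rho[of n B] q, of c False] Pw i by (intro weq_app_r) auto
    also have "(gam n c q ?b @ rho n B) @ (rev P @ [i]) = gam n c q ?b @ (rho n B @ (rev P @ [i]))" by simp
    also have "weq n ... (gam n c q ?b @ rho n B')"
      using B' gam_words[OF q] by (intro weq_app_l)
    finally have e2: "cls n (rho n B @ [a]) = cls n (gam n c q ?b) \<otimes>\<^bsub>coxW n\<^esub> cls n (rho n B')"
      using gam_words[OF q] low_words[OF low_rho]
      by (simp add: mult_cls weq_def cls_eqI q_def)
    have gA: "cls n (gam n c q ?b) \<in> ?A"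
    proof (cases ?b)
      case True
      have "cls n (gam n c q ?b) = inv\<^bsub>pi1 n c\<^esub> (alpha n c q)"
        using True alpha_word_words[OF q] alpha_in_pi1[OF q]
        by (simp add: gam_def inv_pi1 inv_cls alpha_def)
      then show ?thesis using q by (auto intro: generate.inv)
    next
      case False
      then show ?thesis using q by (auto simp: gam_def alpha_def intro: generate.incl)
    qed
    have "cls n (w @ [a]) = (g \<otimes>\<^bsub>pi1 n c\<^esub> cls n (gam n c q ?b)) \<otimes>\<^bsub>coxW n\<^esub> cls n (rho n B')"
      using e1 e2 g gA AW low_words[OF low_rho]
      by (simp add: group.is_monoid[OF group_coxW] monoid.m_assoc cls_in_carrier)
    moreover have "g \<otimes>\<^bsub>pi1 n c\<^esub> cls n (gam n c q ?b) \<in> ?A" using g gA by (intro generate.eng)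
    ultimately show ?thesis by (intro bexI[of _ "g \<otimes>\<^bsub>pi1 n c\<^esub> cls n (gam n c q ?b)"] exI[of _ B'])
  qed
qed

lemma generate_pi1: "carrier (pi1 n c) = generate (pi1 n c) (alpha n c ` {n+1..2*n})"
proof
  let ?A = "generate (pi1 n c) (alpha n c ` {n+1..2*n})"
  show "?A \<subseteq> carrier (pi1 n c)"
    using group.generate_incl[OF group_pi1] alpha_in_pi1 by blast
  show "carrier (pi1 n c) \<subseteq> ?A"
  proof
    fix X assume X: "X \<in> carrier (pi1 n c)"
    then obtain w where w: "w \<in> words n" "X = cls n w" by (auto elim: pi1_carrier_E)
    obtain g B where g: "g \<in> ?A" "cls n w = g \<otimes>\<^bsub>coxW n\<^esub> cls n (rho n B)" using GEN[OF w(1)] by blast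
    have gP: "g \<in> carrier (pi1 n c)" using g(1) \<open>?A \<subseteq> carrier (pi1 n c)\<close> by blast
    have rw: "cls n (rho n B) \<in> carrier (coxW n)" using low_words[OF low_rho] cls_in_carrier by blast
    have gW: "g \<in> carrier (coxW n)" using gP subgroup.subset[OF subgroup_pi1] by blast
    have "cls n (rho n B) = inv\<^bsub>coxW n\<^esub> g \<otimes>\<^bsub>coxW n\<^esub> X"
      using g(2) w(2) gW rw
      by (simp add: monoid.m_assoc[OF group.is_monoid[OF group_coxW], symmetric] group.l_inv[OF group_coxW]
          monoid.l_one[OF group.is_monoid[OF group_coxW]] group.inv_closed[OF group_coxW])
    also have "\<dots> \<in> carrier (pi1 n c)"
      using gP X subgroup.m_closed[OF subgroup_pi1] subgroup.m_inv_closed[OF subgroup_pi1] by blast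
    finally have "rho n B = []" by (rule cls_rho_pi1)
    then have "X = g" using g(2) w(2) gW by (simp add: one_coxW[symmetric] monoid.r_one[OF group.is_monoid[OF group_coxW]])
    then show "X \<in> ?A" using g by simp
  qed
qed



lemma cls_mult_pi1: "u \<in> words n \<Longrightarrow> v \<in> words n \<Longrightarrow> cls n u \<otimes>\<^bsub>pi1 n c\<^esub> cls n v = cls n (u @ v)"
  by (simp add: mult_cls)

lemma TOR_word:
  assumes p: "p \<in> {n+1..2*n}" and q: "q \<in> {n+1..2*n}" and pq: "p < q" and cpq: "c (p - n) (q - n)"
  shows "weq n (alpha_word n c p @ rev (alpha_word n c q)) (alpha_word n c q @ alpha_word n c p)"
proof -
  define j where "j = p - n"
  define i where "i = q - n"
  define x where "x = [j] @ Pw n c p"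
  have ji: "j < i" using pq p q by (auto simp: i_def j_def)
  have lowx: "low n x" using set_Pw[of n c p] p by (auto simp: x_def low_def j_def)
  have awp: "alpha_word n c p = [p] @ x" by (simp add: alpha_word_P x_def j_def)
  have cx: "cpar (\<lambda>a. a = q - n) x = True"
  proof -
    have "cpar (\<lambda>a. a = i) (Pw n c p) = (i \<in> set (Pw n c p))" by (simp add: cpar_distinct distinct_Pw)
    moreover have "i \<in> set (Pw n c p)" using ji cpq q by (auto simp: Pw_def i_def j_def)
    ultimately show ?thesis using ji by (simp add: x_def i_def)
  qed
  have cm: "\<forall>a\<in>set (alpha_word n c q). commuting n a p"
    using set_Pw[of n c q] p q ji by (auto simp: alpha_word_P commuting_def i_def j_def)
  have "weq n (alpha_word n c p @ rev (alpha_word n c q)) ([p] @ (x @ gam n c q True))"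
    using awp p low_words[OF lowx] alpha_word_words[OF q] by (simp add: gam_def, intro weq_refl) auto
  also have "weq n ... ([p] @ (gam n c q False @ x))"
    using CONJ[OF lowx q, of c True] cx p by (intro weq_app_l) auto
  also have "weq n ... ([] @ alpha_word n c q @ [p] @ x)"
  proof -
    have "([] @ alpha_word n c q @ [p] @ x, [] @ [p] @ alpha_word n c q @ x) \<in> wrel n"
      using cm p alpha_word_words[OF q] low_words[OF lowx] by (intro MOVE) auto
    then show ?thesis unfolding weq_def gam_def by (simp add: wrel.wsym)
  qed
  finally show ?thesis using awp by simp
qed

lemma TOR:
  assumes q: "q \<in> torsion_idx n c"
  shows "alpha n c q \<otimes>\<^bsub>pi1 n c\<^esub> alpha n c q \<in> derived (pi1 n c) (carrier (pi1 n c))"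
proof -
  interpret G: group "pi1 n c" by (rule group_pi1)
  obtain p where p: "n + 1 \<le> p" "p < q" "c (p - n) (q - n)" and qJ: "q \<in> {n+1..2*n}"
    using q by (auto simp: torsion_idx_def)
  have pJ: "p \<in> {n+1..2*n}" using p qJ by auto
  let ?a = "alpha n c p" and ?b = "alpha n c q"
  have a: "?a \<in> carrier (pi1 n c)" and b: "?b \<in> carrier (pi1 n c)" using alpha_in_pi1 pJ qJ by auto
  have invb: "inv\<^bsub>pi1 n c\<^esub> ?b = cls n (rev (alpha_word n c q))"
    using b alpha_word_words[OF qJ] by (simp add: inv_pi1 inv_cls alpha_def)
  have rel: "?a \<otimes>\<^bsub>pi1 n c\<^esub> inv\<^bsub>pi1 n c\<^esub> ?b = ?b \<otimes>\<^bsub>pi1 n c\<^esub> ?a"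
    unfolding invb using TOR_word[of p n q c, OF pJ qJ p(2,3)] alpha_word_words[OF pJ] alpha_word_words[OF qJ]
    by (simp add: alpha_def cls_mult_pi1 weq_def cls_eqI del: mult_pi1)
  have "?b \<otimes>\<^bsub>pi1 n c\<^esub> ?a \<otimes>\<^bsub>pi1 n c\<^esub> inv\<^bsub>pi1 n c\<^esub> ?b \<otimes>\<^bsub>pi1 n c\<^esub> inv\<^bsub>pi1 n c\<^esub> ?a
      = ?b \<otimes>\<^bsub>pi1 n c\<^esub> ((?a \<otimes>\<^bsub>pi1 n c\<^esub> inv\<^bsub>pi1 n c\<^esub> ?b) \<otimes>\<^bsub>pi1 n c\<^esub> inv\<^bsub>pi1 n c\<^esub> ?a)"
    using a b by (simp add: G.m_assoc del: mult_pi1)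
  also have "\<dots> = ?b \<otimes>\<^bsub>pi1 n c\<^esub> ?b"
    unfolding rel using a b by (simp add: G.m_assoc del: mult_pi1 one_pi1)
  finally have "?b \<otimes>\<^bsub>pi1 n c\<^esub> ?b \<in> derived_set (pi1 n c) (carrier (pi1 n c))"
    using a b by blast
  then show ?thesis unfolding derived_def by (rule generate.incl)
qed

definition rep :: "nat list set \<Rightarrow> nat list" where
  "rep A = (SOME w. w \<in> A)"

lemma rep_cls: "w \<in> words n \<Longrightarrow> (w, rep (cls n w)) \<in> wrel n"
proof -
  assume "w \<in> words n"
  then have "(w,w) \<in> wrel n" by (rule wrel.wrefl)
  then show ?thesis unfolding rep_def by simp (rule someI)
qed

definition free_idx :: "nat \<Rightarrow> (nat \<Rightarrow> nat \<Rightarrow> bool) \<Rightarrow> nat set" where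
  "free_idx n c = {n+1..2*n} - torsion_idx n c"

definition mu :: "nat \<Rightarrow> nat \<Rightarrow> nat list set \<Rightarrow> int" where
  "mu n q A = fst (dinf n (q - n) (rep A))"

definition nu :: "nat \<Rightarrow> nat list set \<Rightarrow> int" where
  "nu q A = (if cpar (\<lambda>a. a = q) (rep A) then 1 else 0)"

lemma mu_cls: "w \<in> words n \<Longrightarrow> mu n q (cls n w) = fst (dinf n (q - n) w)"
  unfolding mu_def using dinf_wrel[OF rep_cls] by metis

lemma nu_cls: "w \<in> words n \<Longrightarrow> nu q (cls n w) = (if cpar (\<lambda>a. a = q) w then 1 else 0)"
  unfolding nu_def using cpar_wrel[OF rep_cls] by metis

lemma free_snd:
  assumes q: "q \<in> free_idx n c" and w: "w \<in> words n" and l: "\<forall>k\<in>{1..n}. \<not> lam_word n c w k"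
  shows "snd (dinf n (q - n) w) = False"
proof -
  have qJ: "q \<in> {n+1..2*n}" and qT: "q \<notin> torsion_idx n c" using q by (auto simp: free_idx_def)
  let ?k = "q - n"
  have "snd (dinf n ?k w) = cpar (\<lambda>a. lam n c a ?k) w"
    unfolding snd_dinf
  proof (rule cpar_cong)
    fix a assume "a \<in> set w"
    then have a: "a \<in> {1..2*n}" using w by (auto simp: words_def)
    show "(a = ?k \<or> a = ?k + n) = lam n c a ?k"
    proof (cases "a \<le> n")
      case True then show ?thesis using qJ by (auto simp: lam_def)
    next
      case False
      have "\<not> (a - n < ?k \<and> c (a - n) ?k)"
        using qT False a qJ by (auto simp: torsion_idx_def)
      then show ?thesis using False qJ a by (auto simp: lam_def)
    qed
  qed
  moreover have "q - n \<in> {1..n}" using qJ by auto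
  ultimately show ?thesis using l by (simp add: lam_word_cpar)
qed

lemma mu_hom: "q \<in> free_idx n c \<Longrightarrow> mu n q \<in> hom (pi1 n c) integer_group"
proof (rule homI)
  fix x assume "x \<in> carrier (pi1 n c)" then show "mu n q x \<in> carrier integer_group" by simp
next
  fix x y assume q: "q \<in> free_idx n c" and x: "x \<in> carrier (pi1 n c)" and y: "y \<in> carrier (pi1 n c)"
  obtain u where u: "u \<in> words n" "x = cls n u" "\<forall>k\<in>{1..n}. \<not> lam_word n c u k" using x by (rule pi1_carrier_E)
  obtain v where v: "v \<in> words n" "y = cls n v" using y by (rule pi1_carrier_E)
  show "mu n q (x \<otimes>\<^bsub>pi1 n c\<^esub> y) = mu n q x \<otimes>\<^bsub>integer_group\<^esub> mu n q y"
    using u v free_snd[OF q u(1) u(3)]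
    by (simp add: mult_cls mu_cls dinf_append dcomp_def)
qed

lemma nu_hom: "nu q \<in> hom (pi1 n c) (integer_mod_group 2)"
proof (rule homI)
  fix x assume "x \<in> carrier (pi1 n c)" then show "nu q x \<in> carrier (integer_mod_group 2)"
    by (simp add: nu_def carrier_integer_mod_group)
next
  fix x y assume x: "x \<in> carrier (pi1 n c)" and y: "y \<in> carrier (pi1 n c)"
  obtain u where u: "u \<in> words n" "x = cls n u" using x by (rule pi1_carrier_E)
  obtain v where v: "v \<in> words n" "y = cls n v" using y by (rule pi1_carrier_E)
  show "nu q (x \<otimes>\<^bsub>pi1 n c\<^esub> y) = nu q x \<otimes>\<^bsub>integer_mod_group 2\<^esub> nu q y"
    using u v by (simp add: mult_cls nu_cls)
qed

lemma dinf_avoid: "(\<forall>a\<in>set w. a \<noteq> k \<and> a \<noteq> k + n) \<Longrightarrow> dinf n k w = (0, False)"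
  by (induction w) (auto simp: dinf_Cons dstep_def)

lemma mu_alpha:
  assumes q: "q \<in> free_idx n c" and j: "j \<in> {n+1..2*n}"
  shows "mu n q (alpha n c j) = (if j = q then 1 else 0)"
proof -
  have qJ: "q \<in> {n+1..2*n}" and qT: "q \<notin> torsion_idx n c" using q by (auto simp: free_idx_def)
  let ?k = "q - n"
  have "\<forall>a\<in>set (Pw n c j). a \<noteq> ?k \<and> a \<noteq> ?k + n"
  proof
    fix a assume a: "a \<in> set (Pw n c j)"
    then have a1: "j - n < a" "a \<le> n" "c (j - n) a" by (auto simp: Pw_def)
    show "a \<noteq> ?k \<and> a \<noteq> ?k + n"
    proof
      show "a \<noteq> ?k"
      proof
        assume "a = ?k"
        then have "q \<in> torsion_idx n c" using a1 j qJ by (auto simp: torsion_idx_def intro!: exI[of _ j])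
        then show False using qT by simp
      qed
      show "a \<noteq> ?k + n" using a1 qJ by auto
    qed
  qed
  then have P0: "dinf n ?k (Pw n c j) = (0, False)" by (rule dinf_avoid)
  show ?thesis
  proof (cases "j = q")
    case True
    have ne: "q \<noteq> q - n" "q - n + n = q" using qJ by auto
    have "dinf n ?k (alpha_word n c j) = (1, False)"
      using P0 qJ True by (simp add: alpha_word_P dinf_Cons dstep_def ne(2)) (use ne(1) in blast)
    then show ?thesis unfolding alpha_def using alpha_word_words[OF j] True by (simp add: mu_cls)
  next
    case False
    have "dinf n ?k (alpha_word n c j) = (0, False)"
      using P0 qJ j False by (simp add: alpha_word_P dinf_Cons dstep_def) arith
    then show ?thesis unfolding alpha_def using alpha_word_words[OF j] False by (simp add: mu_cls)
  qed
qed

lemma nu_alpha: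
  assumes q: "q \<in> {n+1..2*n}" and j: "j \<in> {n+1..2*n}"
  shows "nu q (alpha n c j) = (if j = q then 1 else 0)"
proof -
  have "cpar (\<lambda>a. a = q) (Pw n c j) = False"
    using set_Pw[of n c j] q by (subst cpar_cong[of _ _ "\<lambda>_. False"]) (auto simp: cpar_def)
  moreover have "j - n \<noteq> q" using q j by auto
  ultimately show ?thesis
    unfolding alpha_def using alpha_word_words[OF j]
    by (simp add: nu_cls alpha_word_P)
qed



lemma derived_kernel:
  assumes G: "group G" and K: "comm_group K" and h: "h \<in> hom G K"
  shows "derived G (carrier G) \<subseteq> kernel G K h"
proof -
  interpret K: comm_group K by (rule K)
  interpret GK: group_hom G K h
    using G K h by (simp add: group_hom_def group_hom_axioms_def comm_group.axioms(2))
  have "derived_set G (carrier G) \<subseteq> kernel G K h"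
  proof
    fix x assume "x \<in> derived_set G (carrier G)"
    then obtain a b where ab: "a \<in> carrier G" "b \<in> carrier G"
      "x = a \<otimes>\<^bsub>G\<^esub> b \<otimes>\<^bsub>G\<^esub> inv\<^bsub>G\<^esub> a \<otimes>\<^bsub>G\<^esub> inv\<^bsub>G\<^esub> b" by blast
    have "h x = h a \<otimes>\<^bsub>K\<^esub> h b \<otimes>\<^bsub>K\<^esub> inv\<^bsub>K\<^esub> h a \<otimes>\<^bsub>K\<^esub> inv\<^bsub>K\<^esub> h b"
      using ab by simp
    also have "\<dots> = h b \<otimes>\<^bsub>K\<^esub> h a \<otimes>\<^bsub>K\<^esub> inv\<^bsub>K\<^esub> h a \<otimes>\<^bsub>K\<^esub> inv\<^bsub>K\<^esub> h b"
      using ab by (simp add: K.m_comm[of "h a" "h b"])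
    also have "\<dots> = h b \<otimes>\<^bsub>K\<^esub> (h a \<otimes>\<^bsub>K\<^esub> inv\<^bsub>K\<^esub> h a) \<otimes>\<^bsub>K\<^esub> inv\<^bsub>K\<^esub> h b"
      using ab by (simp only: K.m_assoc GK.hom_closed K.inv_closed)
    also have "\<dots> = \<one>\<^bsub>K\<^esub>"
      using ab by simp
    finally show "x \<in> kernel G K h" using ab by (simp add: kernel_def)
  qed
  then show ?thesis unfolding derived_def
    by (rule group.generate_subgroup_incl[OF G _ GK.subgroup_kernel])
qed

context
  fixes n :: nat and c :: "nat \<Rightarrow> nat \<Rightarrow> bool"
begin

abbreviation "GG \<equiv> pi1 n c"
abbreviation "DD \<equiv> derived (pi1 n c) (carrier (pi1 n c))"
abbreviation "HH \<equiv> H1 n c"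
abbreviation "JJ \<equiv> {n+1..2*n}"

lemma DD_normal: "DD \<lhd> GG"
  by (rule group.derived_self_is_normal[OF group_pi1])

lemma HH_comm: "comm_group HH"
  unfolding H1_def by (rule group.derived_quot_is_comm_group[OF group_pi1])

lemma pi_hom: "(\<lambda>g. DD #>\<^bsub>GG\<^esub> g) \<in> hom GG HH"
  unfolding H1_def by (rule normal.r_coset_hom_Mod[OF DD_normal])

lemma pi_group_hom: "group_hom GG HH (\<lambda>g. DD #>\<^bsub>GG\<^esub> g)"
  using pi_hom group_pi1 HH_comm
  by (simp add: group_hom_def group_hom_axioms_def comm_group.axioms(2))

lemma carrier_HH: "carrier HH = (\<lambda>g. DD #>\<^bsub>GG\<^esub> g) ` carrier GG"
  by (auto simp: H1_def FactGroup_def RCOSETS_def)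

lemma alpha_bar_in: "j \<in> JJ \<Longrightarrow> alpha_bar n c j \<in> carrier HH"
  unfolding alpha_bar_def carrier_HH using alpha_in_pi1 by blast

lemma HH_generate: "carrier HH = generate HH (alpha_bar n c ` JJ)"
proof -
  have "alpha_bar n c ` JJ = (\<lambda>g. DD #>\<^bsub>GG\<^esub> g) ` (alpha n c ` JJ)"
    by (auto simp: alpha_bar_def)
  moreover have "alpha n c ` JJ \<subseteq> carrier GG" using alpha_in_pi1 by blast
  ultimately show ?thesis
    using group_hom.generate_img[OF pi_group_hom] carrier_HH generate_pi1 by metis
qed

lemma HH_tor: "q \<in> torsion_idx n c \<Longrightarrow> alpha_bar n c q \<otimes>\<^bsub>HH\<^esub> alpha_bar n c q = \<one>\<^bsub>HH\<^esub>"
proof -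
  assume q: "q \<in> torsion_idx n c"
  then have qJ: "q \<in> JJ" by (auto simp: torsion_idx_def)
  have a: "alpha n c q \<in> carrier GG" using alpha_in_pi1 qJ by blast
  have "alpha_bar n c q \<otimes>\<^bsub>HH\<^esub> alpha_bar n c q = DD #>\<^bsub>GG\<^esub> (alpha n c q \<otimes>\<^bsub>GG\<^esub> alpha n c q)"
    using pi_hom a unfolding alpha_bar_def by (simp add: hom_mult del: mult_pi1)
  also have "\<dots> = DD"
    using TOR[OF q] normal.axioms(1)[OF DD_normal] group_pi1 by (simp add: subgroup.rcos_const)
  finally show ?thesis by (simp add: H1_def)
qed

definition mubar :: "nat \<Rightarrow> nat list set set \<Rightarrow> int" where
  "mubar q = (SOME g. g \<in> hom HH integer_group \<and> (\<forall>x\<in>carrier GG. g (DD #>\<^bsub>GG\<^esub> x) = mu n q x))"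

definition nubar :: "nat \<Rightarrow> nat list set set \<Rightarrow> int" where
  "nubar q = (SOME g. g \<in> hom HH (integer_mod_group 2) \<and> (\<forall>x\<in>carrier GG. g (DD #>\<^bsub>GG\<^esub> x) = nu q x))"

lemma lift_ex:
  assumes K: "comm_group K" and h: "h \<in> hom GG K"
  shows "\<exists>g. g \<in> hom HH K \<and> (\<forall>x\<in>carrier GG. g (DD #>\<^bsub>GG\<^esub> x) = h x)"
proof -
  interpret GK: group_hom GG K h
    using group_pi1 K h by (simp add: group_hom_def group_hom_axioms_def comm_group.axioms(2))
  obtain g where "g \<in> hom (GG Mod DD) K" "\<And>x. x \<in> carrier GG \<Longrightarrow> g (r_coset GG DD x) = h x"
    using GK.FactGroup_universal_kernel[OF DD_normal derived_kernel[OF group_pi1 K h]] by blast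
  then show ?thesis unfolding H1_def by blast
qed

lemma mubar: "q \<in> free_idx n c \<Longrightarrow> mubar q \<in> hom HH integer_group \<and> (\<forall>x\<in>carrier GG. mubar q (DD #>\<^bsub>GG\<^esub> x) = mu n q x)"
  unfolding mubar_def by (rule someI_ex[OF lift_ex[OF abelian_integer_group mu_hom]])

lemma nubar: "nubar q \<in> hom HH (integer_mod_group 2) \<and> (\<forall>x\<in>carrier GG. nubar q (DD #>\<^bsub>GG\<^esub> x) = nu q x)"
  unfolding nubar_def by (rule someI_ex[OF lift_ex[OF abelian_integer_mod_group nu_hom]])

lemma mubar_alpha: "q \<in> free_idx n c \<Longrightarrow> j \<in> JJ \<Longrightarrow> mubar q (alpha_bar n c j) = (if j = q then 1 else 0)"
  using mubar alpha_in_pi1 mu_alpha unfolding alpha_bar_def by simp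

lemma nubar_alpha: "q \<in> JJ \<Longrightarrow> j \<in> JJ \<Longrightarrow> nubar q (alpha_bar n c j) = (if j = q then 1 else 0)"
  using nubar alpha_in_pi1 nu_alpha unfolding alpha_bar_def by simp

abbreviation "FP k A \<equiv> finprod HH (\<lambda>j. alpha_bar n c j [^]\<^bsub>HH\<^esub> k j) A"

lemma FP_closed: "A \<subseteq> JJ \<Longrightarrow> FP (k :: nat \<Rightarrow> int) A \<in> carrier HH"
proof -
  interpret H: comm_group HH by (rule HH_comm)
  assume "A \<subseteq> JJ" then show ?thesis using alpha_bar_in by (intro H.finprod_closed) (auto intro!: H.int_pow_closed alpha_bar_in)
qed

lemma EVZ:
  assumes f: "f \<in> hom HH integer_group" and A: "finite A" "A \<subseteq> JJ"
  shows "f (FP k A) = (\<Sum>j\<in>A. k j * f (alpha_bar n c j))"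
  using A
proof (induction A rule: finite_induct)
  case empty
  interpret H: comm_group HH by (rule HH_comm)
  interpret fh: group_hom HH integer_group f using f H.group_axioms
    by (simp add: group_hom_def group_hom_axioms_def)
  show ?case by simp
next
  case (insert a A)
  interpret H: comm_group HH by (rule HH_comm)
  interpret fh: group_hom HH integer_group f using f H.group_axioms
    by (simp add: group_hom_def group_hom_axioms_def)
  have cl: "(\<lambda>j. alpha_bar n c j [^]\<^bsub>HH\<^esub> k j) \<in> A \<rightarrow> carrier HH" "alpha_bar n c a [^]\<^bsub>HH\<^esub> k a \<in> carrier HH"
    using insert alpha_bar_in by auto
  have "FP k (insert a A) = alpha_bar n c a [^]\<^bsub>HH\<^esub> k a \<otimes>\<^bsub>HH\<^esub> FP k A"
    using insert cl by (simp add: H.finprod_insert)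
  then show ?case using insert FP_closed[of A k] alpha_bar_in[of a]
    by (simp add: fh.hom_int_pow)
qed

lemma EV2:
  assumes f: "f \<in> hom HH (integer_mod_group 2)" and A: "finite A" "A \<subseteq> JJ"
  shows "f (FP k A) = (\<Sum>j\<in>A. k j * f (alpha_bar n c j)) mod 2"
  using A
proof (induction A rule: finite_induct)
  case empty
  interpret H: comm_group HH by (rule HH_comm)
  interpret fh: group_hom HH "integer_mod_group 2" f using f H.group_axioms
    by (simp add: group_hom_def group_hom_axioms_def)
  show ?case by simp
next
  case (insert a A)
  interpret H: comm_group HH by (rule HH_comm)
  interpret fh: group_hom HH "integer_mod_group 2" f using f H.group_axioms
    by (simp add: group_hom_def group_hom_axioms_def)
  have cl: "(\<lambda>j. alpha_bar n c j [^]\<^bsub>HH\<^esub> k j) \<in> A \<rightarrow> carrier HH" "alpha_bar n c a [^]\<^bsub>HH\<^esub> k a \<in> carrier HH"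
    using insert alpha_bar_in by auto
  have "FP k (insert a A) = alpha_bar n c a [^]\<^bsub>HH\<^esub> k a \<otimes>\<^bsub>HH\<^esub> FP k A"
    using insert cl by (simp add: H.finprod_insert)
  then show ?case using insert FP_closed[of A k] alpha_bar_in[of a]
    by (simp add: fh.hom_int_pow int_pow_integer_mod_group mod_add_eq)
qed

lemma sum_delta_int: "finite A \<Longrightarrow> q \<in> A \<Longrightarrow> (\<Sum>j\<in>A. k j * (if j = q then 1 else 0)) = (k q :: int)"
proof -
  assume "finite A" "q \<in> A"
  have "(\<Sum>j\<in>A. k j * (if j = q then 1 else 0)) = (\<Sum>j\<in>A. if j = q then k j else 0)"
    by (rule sum.cong) auto
  then show ?thesis using \<open>finite A\<close> \<open>q \<in> A\<close> by simp
qed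

lemma FP_mu: "q \<in> free_idx n c \<Longrightarrow> mubar q (FP k JJ) = k q"
proof -
  assume q: "q \<in> free_idx n c"
  have qJ: "q \<in> JJ" using q by (auto simp: free_idx_def)
  have "mubar q (FP k JJ) = (\<Sum>j\<in>JJ. k j * (if j = q then 1 else 0))"
    using EVZ[OF conjunct1[OF mubar[OF q]], where A=JJ and k=k] mubar_alpha[OF q] by simp
  then show ?thesis using sum_delta_int[of JJ q k] qJ by simp
qed

lemma FP_nu: "q \<in> JJ \<Longrightarrow> nubar q (FP k JJ) = k q mod 2"
proof -
  assume qJ: "q \<in> JJ"
  have "nubar q (FP k JJ) = (\<Sum>j\<in>JJ. k j * (if j = q then 1 else 0)) mod 2"
    using EV2[OF conjunct1[OF nubar[of q]], where A=JJ and k=k] nubar_alpha[OF qJ] by simp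
  then show ?thesis using sum_delta_int[of JJ q k] qJ by simp
qed

lemma FP_one_iff: "FP (k :: nat \<Rightarrow> int) JJ = \<one>\<^bsub>HH\<^esub> \<longleftrightarrow> (\<forall>j\<in>JJ. if j \<in> torsion_idx n c then even (k j) else k j = 0)"
proof
  interpret H: comm_group HH by (rule HH_comm)
  assume e: "FP k JJ = \<one>\<^bsub>HH\<^esub>"
  show "\<forall>j\<in>JJ. if j \<in> torsion_idx n c then even (k j) else k j = 0"
  proof
    fix j assume j: "j \<in> JJ"
    show "if j \<in> torsion_idx n c then even (k j) else k j = 0"
    proof (cases "j \<in> torsion_idx n c")
      case True
      interpret fh: group_hom HH "integer_mod_group 2" "nubar j" using conjunct1[OF nubar] H.group_axioms
        by (simp add: group_hom_def group_hom_axioms_def)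
      have "k j mod 2 = 0" using FP_nu[OF j, of k] e by simp
      then show ?thesis using True by auto
    next
      case False
      then have jf: "j \<in> free_idx n c" using j by (simp add: free_idx_def)
      interpret fh: group_hom HH integer_group "mubar j" using conjunct1[OF mubar[OF jf]] H.group_axioms
        by (simp add: group_hom_def group_hom_axioms_def)
      have "k j = 0" using FP_mu[OF jf, of k] e by simp
      then show ?thesis using False by simp
    qed
  qed
next
  interpret H: comm_group HH by (rule HH_comm)
  assume a: "\<forall>j\<in>JJ. if j \<in> torsion_idx n c then even (k j) else k j = 0"
  show "FP k JJ = \<one>\<^bsub>HH\<^esub>"
  proof (rule H.finprod_one_eqI)
    fix j assume j: "j \<in> JJ"
    have ab: "alpha_bar n c j \<in> carrier HH" using alpha_bar_in[OF j] .
    show "alpha_bar n c j [^]\<^bsub>HH\<^esub> k j = \<one>\<^bsub>HH\<^esub>"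
    proof (cases "j \<in> torsion_idx n c")
      case True
      then obtain m where m: "k j = 2 * m" using a j by (meson dvdE)
      have "alpha_bar n c j [^]\<^bsub>HH\<^esub> (2::int) = alpha_bar n c j \<otimes>\<^bsub>HH\<^esub> alpha_bar n c j"
        using ab int_pow_int[of HH "alpha_bar n c j" 2] by (simp add: numeral_2_eq_2)
      then have "alpha_bar n c j [^]\<^bsub>HH\<^esub> (2::int) = \<one>\<^bsub>HH\<^esub>" using HH_tor[OF True] by simp
      then show ?thesis using m H.int_pow_pow[OF ab, of 2 m] by simp
    next
      case False
      then show ?thesis using a j by simp
    qed
  qed
qed

end



context
  fixes n :: nat and c :: "nat \<Rightarrow> nat \<Rightarrow> bool"
begin

lemma FP_single:
  assumes q: "q \<in> JJ n"
  shows "FP n c (\<lambda>j. if j = q then e else 0) (JJ n) = alpha_bar n c q [^]\<^bsub>HH n c\<^esub> (e::int)"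
proof -
  interpret H: comm_group "HH n c" by (rule HH_comm)
  have JJ: "JJ n = insert q (JJ n - {q})" using q by auto
  have "FP n c (\<lambda>j. if j = q then e else 0) (insert q (JJ n - {q}))
      = alpha_bar n c q [^]\<^bsub>HH n c\<^esub> e \<otimes>\<^bsub>HH n c\<^esub> FP n c (\<lambda>j. if j = q then e else 0) (JJ n - {q})"
    using q alpha_bar_in by (subst H.finprod_insert) (auto intro!: H.int_pow_closed)
  also have "FP n c (\<lambda>j. if j = q then e else 0) (JJ n - {q}) = \<one>\<^bsub>HH n c\<^esub>"
    by (rule H.finprod_one_eqI) (auto simp: alpha_bar_in)
  finally show ?thesis using q alpha_bar_in[OF q] JJ by simp
qed

lemma REP:
  assumes X: "X \<in> carrier (HH n c)"
  shows "\<exists>k::nat \<Rightarrow> int. X = FP n c k (JJ n)"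
proof -
  interpret H: comm_group "HH n c" by (rule HH_comm)
  have "X \<in> generate (HH n c) (alpha_bar n c ` JJ n)" using X HH_generate by blast
  then show ?thesis
  proof (induction rule: generate.induct)
    case one
    have "FP n c (\<lambda>_. 0::int) (JJ n) = \<one>\<^bsub>HH n c\<^esub>"
      by (rule H.finprod_one_eqI) (rule int_pow_0)
    then show ?case by (intro exI[of _ "\<lambda>_. 0::int"]) simp
  next
    case (incl h)
    then obtain q where q: "q \<in> JJ n" "h = alpha_bar n c q" by blast
    have "FP n c (\<lambda>j. if j = q then 1::int else 0) (JJ n) = h"
      using FP_single[OF q(1), of 1] q alpha_bar_in[OF q(1)] by simp
    then show ?case by (intro exI[of _ "\<lambda>j. if j = q then 1::int else 0"]) simp
  next
    case (inv h)
    then obtain q where q: "q \<in> JJ n" "h = alpha_bar n c q" by blast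
    have "FP n c (\<lambda>j. if j = q then -1::int else 0) (JJ n) = inv\<^bsub>HH n c\<^esub> h"
      using FP_single[OF q(1), of "-1"] q alpha_bar_in[OF q(1)] by (simp add: H.int_pow_neg)
    then show ?case by (intro exI[of _ "\<lambda>j. if j = q then -1::int else 0"]) simp
  next
    case (eng h1 h2)
    then obtain k1 k2 :: "nat \<Rightarrow> int" where k: "h1 = FP n c k1 (JJ n)" "h2 = FP n c k2 (JJ n)" by blast
    have "FP n c (\<lambda>j. k1 j + k2 j) (JJ n) = FP n c k1 (JJ n) \<otimes>\<^bsub>HH n c\<^esub> FP n c k2 (JJ n)"
    proof -
      have "FP n c (\<lambda>j. k1 j + k2 j) (JJ n)
          = finprod (HH n c) (\<lambda>j. alpha_bar n c j [^]\<^bsub>HH n c\<^esub> k1 j \<otimes>\<^bsub>HH n c\<^esub> alpha_bar n c j [^]\<^bsub>HH n c\<^esub> k2 j) (JJ n)"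
        by (rule H.finprod_cong') (auto simp: H.int_pow_mult alpha_bar_in)
      also have "\<dots> = FP n c k1 (JJ n) \<otimes>\<^bsub>HH n c\<^esub> FP n c k2 (JJ n)"
        by (rule H.finprod_multf) (auto intro!: H.int_pow_closed alpha_bar_in)
      finally show ?thesis .
    qed
    then show ?case using k by (intro exI[of _ "\<lambda>j. k1 j + k2 j"]) simp
  qed
qed

lemma card_JJ: "card (JJ n) = n"
  by simp

lemma torsion_sub: "torsion_idx n c \<subseteq> JJ n"
  by (auto simp: torsion_idx_def)

lemma card_free: "card (free_idx n c) = n - card (torsion_idx n c)"
  unfolding free_idx_def using torsion_sub by (simp add: card_Diff_subset finite_subset)

abbreviation "TT \<equiv> sum_group {..<n - card (torsion_idx n c)} (\<lambda>_. integer_group)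
                 \<times>\<times> sum_group {..<card (torsion_idx n c)} (\<lambda>_. integer_mod_group 2)"

lemma group_TT: "group TT"
  by (intro DirProd_group sum_group) auto

lemma carrier_TT: "carrier TT = {x \<in> {..<n - card (torsion_idx n c)} \<rightarrow>\<^sub>E UNIV. True}
   \<times> {x \<in> {..<card (torsion_idx n c)} \<rightarrow>\<^sub>E {0..<2}. True}"
  by (simp add: carrier_sum_group carrier_integer_mod_group)

theorem HH_iso: "HH n c \<cong> TT"
proof -
  interpret H: comm_group "HH n c" by (rule HH_comm)
  define F where "F = free_idx n c"
  define T where "T = torsion_idx n c"
  define r where "r = card T"
  have fF: "finite F" and fT: "finite T"
    using torsion_sub by (auto simp: F_def T_def free_idx_def intro: finite_subset)
  obtain e1 where e1: "bij_betw e1 {..<n - r} F"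
    using ex_bij_betw_nat_finite[OF fF] card_free by (auto simp: F_def T_def r_def lessThan_atLeast0)
  obtain e2 where e2: "bij_betw e2 {..<r} T"
    using ex_bij_betw_nat_finite[OF fT] by (auto simp: r_def lessThan_atLeast0)
  define Phi where "Phi X = ((\<lambda>i\<in>{..<n-r}. mubar n c (e1 i) X), (\<lambda>i\<in>{..<r}. nubar n c (e2 i) X))" for X
  have e1F: "i < n - r \<Longrightarrow> e1 i \<in> free_idx n c" for i using e1 by (auto simp: bij_betw_def F_def)
  have e2T: "i < r \<Longrightarrow> e2 i \<in> JJ n" for i using e2 torsion_sub unfolding bij_betw_def T_def by blast
  have muh: "i < n - r \<Longrightarrow> mubar n c (e1 i) \<in> hom (HH n c) integer_group" for i using mubar e1F by blast
  have nuh: "nubar n c q \<in> hom (HH n c) (integer_mod_group 2)" for q using nubar by blast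
  have nu01: "X \<in> carrier (HH n c) \<Longrightarrow> nubar n c q X \<in> {0..<2}" for X q
    using hom_in_carrier[OF nuh] by (simp add: carrier_integer_mod_group)
  have hom: "Phi \<in> hom (HH n c) TT"
  proof (rule homI)
    fix X assume "X \<in> carrier (HH n c)"
    then show "Phi X \<in> carrier TT" using nu01 by (auto simp: Phi_def carrier_sum_group carrier_integer_mod_group r_def T_def)
  next
    fix X Y assume X: "X \<in> carrier (HH n c)" and Y: "Y \<in> carrier (HH n c)"
    show "Phi (X \<otimes>\<^bsub>HH n c\<^esub> Y) = Phi X \<otimes>\<^bsub>TT\<^esub> Phi Y"
      using X Y by (auto simp: Phi_def r_def T_def hom_mult[OF muh] hom_mult[OF nuh] intro!: restrict_ext)
  qed
  have ker: "Phi X = \<one>\<^bsub>TT\<^esub> \<Longrightarrow> X \<in> carrier (HH n c) \<Longrightarrow> X = \<one>\<^bsub>HH n c\<^esub>" for X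
  proof -
    assume P: "Phi X = \<one>\<^bsub>TT\<^esub>" and X: "X \<in> carrier (HH n c)"
    obtain k :: "nat \<Rightarrow> int" where k: "X = FP n c k (JJ n)" using REP[OF X] by blast
    have "\<forall>j\<in>JJ n. if j \<in> torsion_idx n c then even (k j) else k j = 0"
    proof
      fix j assume j: "j \<in> JJ n"
      show "if j \<in> torsion_idx n c then even (k j) else k j = 0"
      proof (cases "j \<in> torsion_idx n c")
        case True
        then obtain i where i: "i < r" "j = e2 i" using e2 by (auto simp: bij_betw_def T_def)
        have "nubar n c (e2 i) X = 0" using P i by (auto simp: Phi_def r_def T_def fun_eq_iff split: if_splits)
        then show ?thesis using FP_nu[of j n c k, OF j] True k i by auto
      next
        case False
        then have jF: "j \<in> F" using j by (auto simp: F_def free_idx_def)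
        then obtain i where i: "i < n - r" "j = e1 i" using e1 by (auto simp: bij_betw_def)
        have "mubar n c (e1 i) X = 0" using P i by (auto simp: Phi_def r_def T_def fun_eq_iff split: if_splits)
        then show ?thesis using FP_mu[of "e1 i" n c k] e1F[OF i(1)] False k i by auto
      qed
    qed
    then show ?thesis using FP_one_iff k by blast
  qed
  have inj: "inj_on Phi (carrier (HH n c))"
  proof -
    interpret Ph: group_hom "HH n c" TT Phi
      using hom H.group_axioms group_TT by (simp add: group_hom_def group_hom_axioms_def)
    have "kernel (HH n c) TT Phi = {\<one>\<^bsub>HH n c\<^esub>}"
      using ker by (auto simp: kernel_def)
    then show ?thesis by (rule Ph.trivial_ker_imp_inj)
  qed
  have surj: "Phi ` carrier (HH n c) = carrier TT"
  proof
    show "Phi ` carrier (HH n c) \<subseteq> carrier TT" using hom_in_carrier[OF hom] by blast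
  next
    show "carrier TT \<subseteq> Phi ` carrier (HH n c)"
    proof
      fix ab assume ab: "ab \<in> carrier TT"
      obtain a b where abd: "ab = (a, b)" by fastforce
      have a: "a \<in> {..<n - r} \<rightarrow>\<^sub>E UNIV" and b: "b \<in> {..<r} \<rightarrow>\<^sub>E {0..<2}"
        using ab abd by (auto simp: carrier_sum_group carrier_integer_mod_group r_def T_def)
      define k where "k j = (if j \<in> T then b (inv_into {..<r} e2 j) else a (inv_into {..<n-r} e1 j))" for j
      define X where "X = FP n c k (JJ n)"
      have X: "X \<in> carrier (HH n c)" unfolding X_def by (rule FP_closed) simp
      have "Phi X = (a, b)"
      proof -
        have 1: "(\<lambda>i\<in>{..<n-r}. mubar n c (e1 i) X) = a"
        proof (rule ext)
          fix i show "(\<lambda>i\<in>{..<n-r}. mubar n c (e1 i) X) i = a i"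
          proof (cases "i < n - r")
            case True
            have "e1 i \<notin> T" using e1F[OF True] by (simp add: T_def free_idx_def)
            moreover have "inv_into {..<n-r} e1 (e1 i) = i"
              using e1 True by (simp add: bij_betw_def inv_into_f_f)
            ultimately show ?thesis using True FP_mu[of "e1 i" n c k, OF e1F[OF True]] by (simp add: X_def k_def)
          next
            case False then show ?thesis using a by (auto simp: PiE_def extensional_def)
          qed
        qed
        have 2: "(\<lambda>i\<in>{..<r}. nubar n c (e2 i) X) = b"
        proof (rule ext)
          fix i show "(\<lambda>i\<in>{..<r}. nubar n c (e2 i) X) i = b i"
          proof (cases "i < r")
            case True
            have "e2 i \<in> T" using e2 True by (auto simp: bij_betw_def)
            moreover have "inv_into {..<r} e2 (e2 i) = i"
              using e2 True by (simp add: bij_betw_def inv_into_f_f)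
            moreover have "b i \<in> {0..<2}" using PiE_mem[OF b, of i] True by simp
            ultimately show ?thesis using True FP_nu[of "e2 i" n c k, OF e2T[OF True]] by (simp add: X_def k_def)
          next
            case False then show ?thesis using b by (auto simp: PiE_def extensional_def)
          qed
        qed
        show ?thesis using 1 2 by (simp add: Phi_def)
      qed
      then show "ab \<in> Phi ` carrier (HH n c)" using X abd by (intro image_eqI[of _ Phi X]) auto
    qed
  qed
  have "Phi \<in> iso (HH n c) TT" using hom inj surj by (simp add: iso_def bij_betw_def)
  then show ?thesis unfolding is_iso_def by blast
qed

end



theorem proposition2p7:
  fixes n :: nat and c :: "nat \<Rightarrow> nat \<Rightarrow> bool"
  assumes "n \<ge> 1" and "bott_matrix n c"
  shows "alpha n c ` {n+1..2*n} \<subseteq> carrier (pi1 n c)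
    \<and> carrier (H1 n c) = generate (H1 n c) (alpha_bar n c ` {n+1..2*n})
    \<and> (\<forall>k :: nat \<Rightarrow> int.
          finprod (H1 n c) (\<lambda>j. alpha_bar n c j [^]\<^bsub>H1 n c\<^esub> k j) {n+1..2*n} = \<one>\<^bsub>H1 n c\<^esub>
          \<longleftrightarrow> (\<forall>j\<in>{n+1..2*n}. if j \<in> torsion_idx n c then even (k j) else k j = 0))
    \<and> H1 n c \<cong> (sum_group {..<n - card (torsion_idx n c)} (\<lambda>_. integer_group)
                 \<times>\<times> sum_group {..<card (torsion_idx n c)} (\<lambda>_. integer_mod_group 2))"
proof (intro conjI allI)
  show "alpha n c ` {n+1..2*n} \<subseteq> carrier (pi1 n c)" using alpha_in_pi1 by blast
  show "carrier (H1 n c) = generate (H1 n c) (alpha_bar n c ` {n+1..2*n})" by (rule HH_generate)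
  show "H1 n c \<cong> (sum_group {..<n - card (torsion_idx n c)} (\<lambda>_. integer_group)
                 \<times>\<times> sum_group {..<card (torsion_idx n c)} (\<lambda>_. integer_mod_group 2))" by (rule HH_iso)
  fix k :: "nat \<Rightarrow> int"
  show "finprod (H1 n c) (\<lambda>j. alpha_bar n c j [^]\<^bsub>H1 n c\<^esub> k j) {n+1..2*n} = \<one>\<^bsub>H1 n c\<^esub>
          \<longleftrightarrow> (\<forall>j\<in>{n+1..2*n}. if j \<in> torsion_idx n c then even (k j) else k j = 0)"
    by (rule FP_one_iff)
qed

end
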